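(* Let $G \ne K_4$ be a connected, claw-free, cubic graph, and let $u(G)$ denote the number of units of $G$. Then \[ u(G)+1 \le \sigma_{(2,1)}(G) \le u(G)+2 . \]
   Context: A graph is claw-free if it has no induced subgraph isomorphic to $K_{1,3}$; it is cubic if every vertex has degree $3$. A diamond is an induced subgraph isomorphic to $K_4$ minus one edge. For a connected, claw-free, cubic graph $G\neq K_4$, the vertex set $V(G)$ can be uniquely partitioned into sets each of which induces a triangle or a diamond in $G$; the parts of this partition are called units (triangle-units and diamond-units), and $u(G)$ is the number of units. $(p,q)$-spreading: let $p\in\mathbb{N}$ and $q\in\mathbb{N}\cup\{\infty\}$. Start with a set $S\subseteq V(G)$ of blue vertices, all other vertices white. The color change rule: if a white vertex $w$ has at least $p$ blue neighbors, and at least one of the blue neighbors of $w$ has at most $q$ white neighbors, then $w$ is recolored blue. $S$ is a $(p,q)$-spreading set if repeatedly applying this rule eventually colors all vertices blue. $\sigma_{(p,q)}(G)$ is the minimum cardinality of a $(p,q)$-spreading set of $G$. *)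

theory Defs
  imports Main "HOL-Library.Extended_Nat"
begin

definition graph :: "'a set \<Rightarrow> ('a \<Rightarrow> 'a \<Rightarrow> bool) \<Rightarrow> bool" where
  "graph V E \<longleftrightarrow> finite V \<and> (\<forall>x y. E x y \<longrightarrow> x \<in> V \<and> y \<in> V)
     \<and> (\<forall>x y. E x y \<longrightarrow> E y x) \<and> (\<forall>x. \<not> E x x)"

definition nbrs :: "'a set \<Rightarrow> ('a \<Rightarrow> 'a \<Rightarrow> bool) \<Rightarrow> 'a \<Rightarrow> 'a set" where
  "nbrs V E v = {w \<in> V. E v w}"

definition cubic :: "'a set \<Rightarrow> ('a \<Rightarrow> 'a \<Rightarrow> bool) \<Rightarrow> bool" where
  "cubic V E \<longleftrightarrow> (\<forall>v\<in>V. card (nbrs V E v) = 3)"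

definition connected_graph :: "'a set \<Rightarrow> ('a \<Rightarrow> 'a \<Rightarrow> bool) \<Rightarrow> bool" where
  "connected_graph V E \<longleftrightarrow> V \<noteq> {} \<and>
     (\<forall>x\<in>V. \<forall>y\<in>V. (\<lambda>a b. a \<in> V \<and> b \<in> V \<and> E a b)\<^sup>*\<^sup>* x y)"

definition claw_free :: "'a set \<Rightarrow> ('a \<Rightarrow> 'a \<Rightarrow> bool) \<Rightarrow> bool" where
  "claw_free V E \<longleftrightarrow> \<not> (\<exists>v\<in>V. \<exists>a b c. a \<in> nbrs V E v \<and> b \<in> nbrs V E v \<and> c \<in> nbrs V E v
      \<and> a \<noteq> b \<and> a \<noteq> c \<and> b \<noteq> c \<and> \<not> E a b \<and> \<not> E a c \<and> \<not> E b c)"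

definition is_K4 :: "'a set \<Rightarrow> ('a \<Rightarrow> 'a \<Rightarrow> bool) \<Rightarrow> bool" where
  "is_K4 V E \<longleftrightarrow> card V = 4 \<and> (\<forall>x\<in>V. \<forall>y\<in>V. x \<noteq> y \<longrightarrow> E x y)"

definition induced_edges :: "('a \<Rightarrow> 'a \<Rightarrow> bool) \<Rightarrow> 'a set \<Rightarrow> 'a set set" where
  "induced_edges E S = {{x, y} | x y. x \<in> S \<and> y \<in> S \<and> x \<noteq> y \<and> E x y}"

definition induces_triangle :: "'a set \<Rightarrow> ('a \<Rightarrow> 'a \<Rightarrow> bool) \<Rightarrow> 'a set \<Rightarrow> bool" where
  "induces_triangle V E S \<longleftrightarrow> S \<subseteq> V \<and> card S = 3 \<and> (\<forall>x\<in>S. \<forall>y\<in>S. x \<noteq> y \<longrightarrow> E x y)"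

definition induces_diamond :: "'a set \<Rightarrow> ('a \<Rightarrow> 'a \<Rightarrow> bool) \<Rightarrow> 'a set \<Rightarrow> bool" where
  "induces_diamond V E S \<longleftrightarrow> S \<subseteq> V \<and> card S = 4 \<and> card (induced_edges E S) = 5"

definition unit_partition :: "'a set \<Rightarrow> ('a \<Rightarrow> 'a \<Rightarrow> bool) \<Rightarrow> 'a set set \<Rightarrow> bool" where
  "unit_partition V E P \<longleftrightarrow> \<Union>P = V \<and> (\<forall>A\<in>P. \<forall>B\<in>P. A \<noteq> B \<longrightarrow> A \<inter> B = {})
     \<and> (\<forall>A\<in>P. induces_triangle V E A \<or> induces_diamond V E A)"

text \<open>u(G): number of units of the (unique) partition into triangle/diamond units.\<close>
definition num_units :: "'a set \<Rightarrow> ('a \<Rightarrow> 'a \<Rightarrow> bool) \<Rightarrow> nat" where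
  "num_units V E = card (THE P. unit_partition V E P)"

text \<open>One application of the (p,q) colour change rule: white w becomes blue.\<close>
definition spread_step :: "nat \<Rightarrow> enat \<Rightarrow> 'a set \<Rightarrow> ('a \<Rightarrow> 'a \<Rightarrow> bool) \<Rightarrow> 'a set \<Rightarrow> 'a set \<Rightarrow> bool" where
  "spread_step p q V E B B' \<longleftrightarrow> (\<exists>w\<in>V. w \<notin> B \<and> B' = insert w B
     \<and> card {v \<in> nbrs V E w. v \<in> B} \<ge> p
     \<and> (\<exists>b \<in> nbrs V E w. b \<in> B \<and> enat (card {x \<in> nbrs V E b. x \<notin> B}) \<le> q))"

definition spreading_set :: "nat \<Rightarrow> enat \<Rightarrow> 'a set \<Rightarrow> ('a \<Rightarrow> 'a \<Rightarrow> bool) \<Rightarrow> 'a set \<Rightarrow> bool" where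
  "spreading_set p q V E S \<longleftrightarrow> S \<subseteq> V \<and> (spread_step p q V E)\<^sup>*\<^sup>* S V"

definition sigma :: "nat \<Rightarrow> enat \<Rightarrow> 'a set \<Rightarrow> ('a \<Rightarrow> 'a \<Rightarrow> bool) \<Rightarrow> nat" where
  "sigma p q V E = (LEAST k. \<exists>S. spreading_set p q V E S \<and> card S = k)"

end

theory Submission
  imports Defs
begin

definition tri :: "('a \<Rightarrow> 'a \<Rightarrow> bool) \<Rightarrow> 'a \<Rightarrow> 'a \<Rightarrow> 'a \<Rightarrow> bool" where
  "tri E x y z \<longleftrightarrow> distinct [x,y,z] \<and> E x y \<and> E x z \<and> E y z"

definition dpat :: "('a \<Rightarrow> 'a \<Rightarrow> bool) \<Rightarrow> 'a \<Rightarrow> 'a \<Rightarrow> 'a \<Rightarrow> 'a \<Rightarrow> bool" where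
  "dpat E a b c d \<longleftrightarrow> distinct [a,b,c,d] \<and> E a b \<and> E a c \<and> E b c \<and> E b d \<and> E c d \<and> \<not> E a d"

definition isunit :: "('a \<Rightarrow> 'a \<Rightarrow> bool) \<Rightarrow> 'a set \<Rightarrow> bool" where
  "isunit E U \<longleftrightarrow> (\<exists>x y z. U = {x,y,z} \<and> tri E x y z) \<or> (\<exists>a b c d. U = {a,b,c,d} \<and> dpat E a b c d)"

lemma card4_obtain:
  assumes "card U = 4"
  obtains a b c d where "U = {a,b,c,d}" "distinct [a,b,c,d]"
proof -
  have "card U = Suc 3" using assms by simp
  then obtain a A where "U = insert a A" "a \<notin> A" "card A = 3"
    unfolding card_Suc_eq by blast
  moreover from \<open>card A = 3\<close> obtain b c d where "A = {b,c,d}" "b \<noteq> c" "c \<noteq> d" "b \<noteq> d"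
    by (auto simp: card_3_iff)
  ultimately show ?thesis using that by auto
qed

lemma card_ge2_obtain:
  assumes "2 \<le> card A"
  obtains p q where "p \<in> A" "q \<in> A" "p \<noteq> q"
proof -
  have fA: "finite A" using assms by (metis card.infinite not_numeral_le_zero)
  have "\<not> card A \<le> Suc 0" using assms by simp
  hence "\<not> (\<forall>p\<in>A. \<forall>q\<in>A. p = q)" using card_le_Suc0_iff_eq[OF fA] by simp
  then show ?thesis using that by blast
qed

locale cg =
  fixes V :: "'a set" and E :: "'a \<Rightarrow> 'a \<Rightarrow> bool"
  assumes G: "graph V E" and CO: "connected_graph V E" and CF: "claw_free V E"
    and CU: "cubic V E" and NK: "\<not> is_K4 V E"
begin

lemma symE: "E x y \<Longrightarrow> E y x" using G by (auto simp: graph_def)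
lemma inV1: "E x y \<Longrightarrow> x \<in> V" using G by (auto simp: graph_def)
lemma inV2: "E x y \<Longrightarrow> y \<in> V" using G by (auto simp: graph_def)
lemma irr: "\<not> E x x" using G by (auto simp: graph_def)
lemma finV: "finite V" using G by (auto simp: graph_def)

lemma card_nbrs: "v \<in> V \<Longrightarrow> card (nbrs V E v) = 3"
  using CU by (auto simp: cubic_def)

lemma fin_nbrs: "finite (nbrs V E v)" using finV by (auto simp: nbrs_def)

lemma no4:
  assumes "E v p" "E v q" "E v r" "E v s" "distinct [p,q,r,s]"
  shows False
proof -
  have "{p,q,r,s} \<subseteq> nbrs V E v" using assms inV2 by (auto simp: nbrs_def)
  hence "card {p,q,r,s} \<le> card (nbrs V E v)" using fin_nbrs by (rule card_mono[rotated])
  moreover have "card {p,q,r,s} = 4" using assms(5) by simp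
  moreover have "v \<in> V" using assms inV1 by blast
  ultimately show False using card_nbrs by simp
qed

lemma nbrs3:
  assumes "E v p" "E v q" "E v r" "distinct [p,q,r]" "E v z"
  shows "z = p \<or> z = q \<or> z = r"
  using no4[of v p q r z] assms by auto

lemma exists3:
  assumes "v \<in> V"
  obtains p q r where "distinct [p,q,r]" "E v p" "E v q" "E v r"
proof -
  from card_nbrs[OF assms] obtain p q r where "nbrs V E v = {p,q,r}" "p \<noteq> q" "q \<noteq> r" "p \<noteq> r"
    by (auto simp: card_3_iff)
  hence "p \<in> nbrs V E v" "q \<in> nbrs V E v" "r \<in> nbrs V E v" by auto
  hence "E v p" "E v q" "E v r" by (auto simp: nbrs_def)
  then show ?thesis using that \<open>p \<noteq> q\<close> \<open>q \<noteq> r\<close> \<open>p \<noteq> r\<close> by simp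
qed

lemma in_tri:
  assumes "v \<in> V"
  obtains p q where "tri E v p q"
proof -
  obtain p q r where d: "distinct [p,q,r]" "E v p" "E v q" "E v r" using exists3[OF assms] by blast
  have "E p q \<or> E p r \<or> E q r"
  proof (rule ccontr)
    assume n: "\<not> (E p q \<or> E p r \<or> E q r)"
    have "p \<in> nbrs V E v" "q \<in> nbrs V E v" "r \<in> nbrs V E v" using d inV2 by (auto simp: nbrs_def)
    hence "\<exists>v\<in>V. \<exists>a b c. a \<in> nbrs V E v \<and> b \<in> nbrs V E v \<and> c \<in> nbrs V E v
      \<and> a \<noteq> b \<and> a \<noteq> c \<and> b \<noteq> c \<and> \<not> E a b \<and> \<not> E a c \<and> \<not> E b c"
      using n d assms by (intro bexI[of _ v] exI[of _ p] exI[of _ q] exI[of _ r]) auto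
    with CF show False unfolding claw_free_def by blast
  qed
  moreover have "v \<noteq> p" "v \<noteq> q" "v \<noteq> r" using d irr by auto
  ultimately show ?thesis
  proof (elim disjE)
    assume "E p q" then show ?thesis using that[of p q] d \<open>v \<noteq> p\<close> \<open>v \<noteq> q\<close> \<open>v \<noteq> r\<close> unfolding tri_def by simp
  next
    assume "E p r" then show ?thesis using that[of p r] d \<open>v \<noteq> p\<close> \<open>v \<noteq> q\<close> \<open>v \<noteq> r\<close> unfolding tri_def by simp
  next
    assume "E q r" then show ?thesis using that[of q r] d \<open>v \<noteq> p\<close> \<open>v \<noteq> q\<close> \<open>v \<noteq> r\<close> unfolding tri_def by simp
  qed
qed

lemma K4:
  assumes "distinct [a,b,c,d]" "E a b" "E a c" "E a d" "E b c" "E b d" "E c d"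
  shows False
proof -
  let ?K = "{a,b,c,d}"
  have cl: "y \<in> ?K" if "x \<in> ?K" "E x y" for x y
  proof -
    have "E b a" "E c a" "E d a" "E c b" "E d b" "E d c" using assms symE by auto
    then show ?thesis using that assms nbrs3[of a b c d y] nbrs3[of b a c d y] nbrs3[of c a b d y] nbrs3[of d a b c y]
      by auto
  qed
  have aV: "a \<in> V" using assms inV1 by blast
  have "y \<in> ?K" if "y \<in> V" for y
  proof -
    have "(\<lambda>a b. a \<in> V \<and> b \<in> V \<and> E a b)\<^sup>*\<^sup>* a y" using CO aV that by (auto simp: connected_graph_def)
    then show ?thesis
    proof (induct rule: rtranclp_induct)
      case base show ?case by simp
    next
      case (step y z) then show ?case using cl by blast
    qed
  qed
  moreover have "?K \<subseteq> V" using assms inV1 inV2 by blast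
  ultimately have "V = ?K" by blast
  hence "is_K4 V E" using assms symE by (auto simp: is_K4_def)
  with NK show False by simp
qed


lemma dpat_sym1: "dpat E a b c d \<Longrightarrow> dpat E a c b d" using symE by (auto simp: dpat_def)
lemma dpat_sym2: "dpat E a b c d \<Longrightarrow> dpat E d b c a" using symE by (auto simp: dpat_def)
lemma dpat_b: "dpat E a b c d \<Longrightarrow> E b z \<Longrightarrow> z = a \<or> z = c \<or> z = d"
  using nbrs3[of b a c d z] symE by (auto simp: dpat_def)
lemma dpat_c: "dpat E a b c d \<Longrightarrow> E c z \<Longrightarrow> z = a \<or> z = b \<or> z = d"
  using nbrs3[of c a b d z] symE by (auto simp: dpat_def)

lemma dpat_ind:
  assumes "dpat E a b c d" shows "induces_diamond V E {a,b,c,d}"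
proof -
  have I: "induced_edges E {a,b,c,d} = {{a,b},{a,c},{b,c},{b,d},{c,d}}"
    using assms symE irr unfolding induced_edges_def dpat_def by (auto simp: insert_commute)
  show ?thesis using assms inV1 inV2 unfolding induces_diamond_def I dpat_def by (auto simp: doubleton_eq_iff)
qed

lemma tri_ind: "tri E x y z \<Longrightarrow> induces_triangle V E {x,y,z}"
  using symE inV1 inV2 by (auto simp: tri_def induces_triangle_def)

lemma ind_tri: "induces_triangle V E U \<Longrightarrow> \<exists>x y z. U = {x,y,z} \<and> tri E x y z"
  unfolding induces_triangle_def tri_def card_3_iff by (clarsimp, blast)

end

context cg begin
lemma ind_dpat:
  assumes "induces_diamond V E U"
  shows "\<exists>a b c d. U = {a,b,c,d} \<and> dpat E a b c d"
proof -
  from assms have c4: "card U = 4" and c5: "card (induced_edges E U) = 5"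
    by (auto simp: induces_diamond_def)
  from c4 obtain a b c d where U: "U = {a,b,c,d}" and abcd: "distinct [a,b,c,d]" by (rule card4_obtain)
  let ?I = "induced_edges E U"
  let ?S = "{{a,b},{a,c},{a,d},{b,c},{b,d},{c,d}}"
  have inS: "{x,y} \<in> ?S" if "x \<in> {a,b,c,d}" "y \<in> {a,b,c,d}" "x \<noteq> y" for x y
    using that
    by (elim insertE emptyE; simp add: insert_commute[of b a] insert_commute[of c a] insert_commute[of d a]
         insert_commute[of c b] insert_commute[of d b] insert_commute[of d c])
  have IS: "?I \<subseteq> ?S"
  proof
    fix s assume "s \<in> ?I"
    then obtain x y where xy: "s = {x,y}" "x \<in> U" "y \<in> U" "x \<noteq> y" unfolding induced_edges_def by blast
    show "s \<in> ?S" unfolding xy(1) by (rule inS) (use xy U in auto)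
  qed
  have mem: "E x y" if "{x,y} \<in> ?I" for x y
  proof -
    from that obtain p q where pq: "{x,y} = {p,q}" "E p q" unfolding induced_edges_def by blast
    then have "(x = p \<and> y = q) \<or> (x = q \<and> y = p)" by (simp add: doubleton_eq_iff)
    then show ?thesis using pq(2) symE by blast
  qed
  have cS: "card ?S \<le> 6" using card_length[of "[{a,b},{a,c},{a,d},{b,c},{b,d},{c,d}]"] by (simp only: list.set length_Cons list.size)
  have tm: False if "x \<in> {a,b,c,d}" "y \<in> {a,b,c,d}" "x' \<in> {a,b,c,d}" "y' \<in> {a,b,c,d}"
     "\<not> (x = x' \<and> y = y')" "\<not> (x = y' \<and> y = x')" "\<not> E x y" "\<not> E x' y'" "x \<noteq> y" "x' \<noteq> y'"
    for x y x' y'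
  proof -
    have d: "{x,y} \<noteq> {x',y'}" using that(5,6) by (simp add: doubleton_eq_iff)
    have s1: "{x,y} \<in> ?S" "{x',y'} \<in> ?S" by (rule inS[OF that(1,2,9)], rule inS[OF that(3,4,10)])
    have n1: "{x,y} \<notin> ?I" "{x',y'} \<notin> ?I"
    proof -
      show "{x,y} \<notin> ?I" proof assume "{x,y} \<in> ?I" from mem[OF this] that(7) show False by simp qed
      show "{x',y'} \<notin> ?I" proof assume "{x',y'} \<in> ?I" from mem[OF this] that(8) show False by simp qed
    qed
    have sub: "?I \<subseteq> ?S - {{x,y},{x',y'}}"
    proof
      fix s assume s: "s \<in> ?I"
      have sS: "s \<in> ?S" using IS s by (rule subsetD)
      have "s \<noteq> {x,y}" using s n1(1) by metis
      moreover have "s \<noteq> {x',y'}" using s n1(2) by metis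
      ultimately have "s \<notin> {{x,y},{x',y'}}" by (metis insertE empty_iff)
      then show "s \<in> ?S - {{x,y},{x',y'}}" using sS by (rule DiffI[rotated])
    qed
    have fin: "finite (?S - {{x,y},{x',y'}})" by (rule finite_Diff) (rule finite.insertI finite.emptyI)+
    have "card ?I \<le> card (?S - {{x,y},{x',y'}})" by (rule card_mono[OF fin sub])
    also have "\<dots> = card ?S - card {{x,y},{x',y'}}"
      by (rule card_Diff_subset, (rule finite.insertI finite.emptyI)+, simp only: insert_subset s1 empty_subsetI simp_thms)
    also have "card {{x,y},{x',y'}} = 2" using d by (simp only: card_2_iff) blast
    finally have "card ?I \<le> card ?S - 2" .
    then show False using cS c5 by linarith
  qed
  have "\<not> (E a b \<and> E a c \<and> E a d \<and> E b c \<and> E b d \<and> E c d)" using K4 abcd by blast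
  then have "\<not> E a b \<or> \<not> E a c \<or> \<not> E a d \<or> \<not> E b c \<or> \<not> E b d \<or> \<not> E c d" by blast
  then have "\<exists>x y. x \<in> {a,b,c,d} \<and> y \<in> {a,b,c,d} \<and> x \<noteq> y \<and> \<not> E x y"
  proof (elim disjE)
    assume "\<not> E a b" then show ?thesis using abcd by (intro exI[of _ a] exI[of _ b]) auto
  next
    assume "\<not> E a c" then show ?thesis using abcd by (intro exI[of _ a] exI[of _ c]) auto
  next
    assume "\<not> E a d" then show ?thesis using abcd by (intro exI[of _ a] exI[of _ d]) auto
  next
    assume "\<not> E b c" then show ?thesis using abcd by (intro exI[of _ b] exI[of _ c]) auto
  next
    assume "\<not> E b d" then show ?thesis using abcd by (intro exI[of _ b] exI[of _ d]) auto
  next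
    assume "\<not> E c d" then show ?thesis using abcd by (intro exI[of _ c] exI[of _ d]) auto
  qed
  then obtain x y where xy: "x \<in> {a,b,c,d}" "y \<in> {a,b,c,d}" "x \<noteq> y" "\<not> E x y"
    by blast
  have "card ({a,b,c,d} - {x,y}) = 2"
  proof -
    have "card ({a,b,c,d} - {x,y}) = card {a,b,c,d} - card {x,y}"
      using xy by (intro card_Diff_subset) auto
    then show ?thesis using abcd xy(3) by simp
  qed
  then obtain u v where uv: "{a,b,c,d} - {x,y} = {u,v}" "u \<noteq> v" by (auto simp: card_2_iff)
  have u: "u \<in> {a,b,c,d}" "u \<noteq> x" "u \<noteq> y" and v: "v \<in> {a,b,c,d}" "v \<noteq> x" "v \<noteq> y"
    using uv(1) by blast+
  have Deq: "{a,b,c,d} = {x,u,v,y}" using uv(1) xy(1,2) by blast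
  have Exu: "E x u" by (rule ccontr) (rule tm[OF xy(1) u(1) xy(1) xy(2)], use u xy in auto)
  have Exv: "E x v" by (rule ccontr) (rule tm[OF xy(1) v(1) xy(1) xy(2)], use v xy in auto)
  have Euv: "E u v" by (rule ccontr) (rule tm[OF u(1) v(1) xy(1) xy(2)], use u v uv(2) xy in auto)
  have Euy: "E u y" by (rule ccontr) (rule tm[OF u(1) xy(2) xy(1) xy(2)], use u xy in auto)
  have Evy: "E v y" by (rule ccontr) (rule tm[OF v(1) xy(2) xy(1) xy(2)], use v xy in auto)
  have "dpat E x u v y" unfolding dpat_def using Exu Exv Euv Euy Evy xy u v uv(2) by auto
  then show ?thesis using Deq U by blast
qed
end

context cg begin

lemma isunit_ind: "isunit E U \<longleftrightarrow> induces_triangle V E U \<or> induces_diamond V E U"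
proof
  assume "isunit E U"
  then show "induces_triangle V E U \<or> induces_diamond V E U"
    unfolding isunit_def using tri_ind dpat_ind by (elim disjE exE conjE) simp_all
next
  assume "induces_triangle V E U \<or> induces_diamond V E U"
  then show "isunit E U"
  proof
    assume "induces_triangle V E U"
    then obtain x y z where "U = {x,y,z}" "tri E x y z" using ind_tri by blast
    then show ?thesis unfolding isunit_def by blast
  next
    assume "induces_diamond V E U"
    then obtain a b c d where "U = {a,b,c,d}" "dpat E a b c d" using ind_dpat by blast
    then show ?thesis unfolding isunit_def by blast
  qed
qed

lemma tri_perm: "tri E x y z \<Longrightarrow> tri E y x z \<and> tri E x z y \<and> tri E z y x \<and> tri E y z x \<and> tri E z x y"
  using symE by (auto simp: tri_def)

lemma tri_rot: "tri E x y z \<Longrightarrow> w \<in> {x,y,z} \<Longrightarrow> \<exists>p q. {x,y,z} = {w,p,q} \<and> tri E w p q"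
proof -
  assume t: "tri E x y z" and w: "w \<in> {x,y,z}"
  from w consider "w = x" | "w = y" | "w = z" by blast
  then show ?thesis
  proof cases
    case 1 then show ?thesis using t by blast
  next
    case 2 then show ?thesis using tri_perm[OF t] by (intro exI[of _ x] exI[of _ z]) (auto simp: insert_commute)
  next
    case 3 then show ?thesis using tri_perm[OF t] by (intro exI[of _ x] exI[of _ y]) (auto simp: insert_commute)
  qed
qed

lemma unit_two:
  assumes "isunit E U" "x \<in> U"
  shows "\<exists>p q. p \<noteq> q \<and> p \<in> U \<and> q \<in> U \<and> E x p \<and> E x q"
proof -
  from assms(1) consider (t) a b c where "U = {a,b,c}" "tri E a b c"
    | (d) a b c d where "U = {a,b,c,d}" "dpat E a b c d" unfolding isunit_def by blast
  then show ?thesis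
  proof cases
    case t
    then have h: "E a b" "E a c" "E b c" "E b a" "E c a" "E c b" "distinct [a,b,c]" "U = {a,b,c}"
      using symE unfolding tri_def by auto
    from assms(2) h(8) consider "x = a" | "x = b" | "x = c" by auto
    then show ?thesis
    proof cases
      case 1 then show ?thesis using h by (intro exI[of _ b] exI[of _ c]) simp
    next
      case 2 then show ?thesis using h by (intro exI[of _ a] exI[of _ c]) simp
    next
      case 3 then show ?thesis using h by (intro exI[of _ a] exI[of _ b]) simp
    qed
  next
    case d
    then have h: "E a b" "E a c" "E b c" "E b a" "E c a" "E c b" "E b d" "E d b" "E c d" "E d c"
      "distinct [a,b,c,d]" "U = {a,b,c,d}"
      using symE unfolding dpat_def by auto
    from assms(2) h(12) consider "x = a" | "x = b" | "x = c" | "x = d" by auto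
    then show ?thesis
    proof cases
      case 1 then show ?thesis using h by (intro exI[of _ b] exI[of _ c]) simp
    next
      case 2 then show ?thesis using h by (intro exI[of _ a] exI[of _ c]) simp
    next
      case 3 then show ?thesis using h by (intro exI[of _ a] exI[of _ b]) simp
    next
      case 4 then show ?thesis using h by (intro exI[of _ b] exI[of _ c]) simp
    qed
  qed
qed

lemma isunit_sub: "isunit E U \<Longrightarrow> U \<subseteq> V"
  using inV1 inV2 unfolding isunit_def tri_def dpat_def by auto

lemma isunit_fin: "isunit E U \<Longrightarrow> finite U"
  unfolding isunit_def by auto

lemma isunit_ne: "isunit E U \<Longrightarrow> U \<noteq> {}"
  unfolding isunit_def by auto

lemma out_unique:
  assumes "isunit E U" "x \<in> U" "E x p" "E x q" "p \<notin> U" "q \<notin> U"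
  shows "p = q"
proof (rule ccontr)
  assume pq: "p \<noteq> q"
  obtain r s where "r \<noteq> s" "r \<in> U" "s \<in> U" "E x r" "E x s" using unit_two[OF assms(1,2)] by blast
  then show False using no4[of x r s p q] assms pq by auto
qed

lemma tipnb:
  assumes "dpat E a b c d" "E a u" "E a u'" "u \<noteq> u'"
  shows "u \<in> {b,c} \<or> u' \<in> {b,c}"
  using no4[of a b c u u'] assms unfolding dpat_def by auto

lemma dclosed:
  assumes D: "dpat E a b c d" and T: "tri E x y z" and m: "{x,y,z} \<inter> {a,b,c,d} \<noteq> {}"
  shows "{x,y,z} \<subseteq> {a,b,c,d}"
proof -
  have cen: "{x,y,z} \<subseteq> {a,b,c,d}" if w1: "w \<in> {x,y,z}" and w2: "w \<in> {b,c}" for w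
  proof -
    obtain p q where pq0: "{x,y,z} = {w,p,q} \<and> tri E w p q" using tri_rot[OF T w1] by iprover
    note pq = pq0[THEN conjunct1] pq0[THEN conjunct2]
    have "p \<in> {a,b,c,d}" "q \<in> {a,b,c,d}" using pq(2) w2 dpat_b[OF D] dpat_c[OF D]
      unfolding tri_def by auto
    then show ?thesis using pq(1) w2 by auto
  qed
  have tip: "{x,y,z} \<inter> {b,c} \<noteq> {}" if w1: "w \<in> {x,y,z}" and w2: "w \<in> {a,d}" for w
  proof -
    obtain p q where pq0: "{x,y,z} = {w,p,q} \<and> tri E w p q" using tri_rot[OF T w1] by iprover
    note pq = pq0[THEN conjunct1] pq0[THEN conjunct2]
    have "p \<in> {b,c} \<or> q \<in> {b,c}"
    proof (cases "w = a")
      case True then show ?thesis using tipnb[OF D, of p q] pq(2) unfolding tri_def by auto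
    next
      case False then have "w = d" using w2 by auto
      then show ?thesis using tipnb[OF dpat_sym2[OF D], of p q] pq(2) unfolding tri_def by auto
    qed
    then show ?thesis using pq(1) by auto
  qed
  from m obtain w where w: "w \<in> {x,y,z}" "w \<in> {a,b,c,d}" by blast
  show ?thesis
  proof (cases "w \<in> {b,c}")
    case True then show ?thesis using cen w by blast
  next
    case False then have "w \<in> {a,d}" using w by auto
    then obtain w' where "w' \<in> {x,y,z}" "w' \<in> {b,c}" using tip[OF w(1)] by blast
    then show ?thesis using cen by blast
  qed
qed

lemma tt:
  assumes "tri E v p q" "E v s" "E p s" "s \<noteq> q" "s \<noteq> v" "s \<noteq> p"
  shows "\<exists>a b c d. {v,p,q} \<subseteq> {a,b,c,d} \<and> dpat E a b c d"
proof -
  have "\<not> E q s" using K4[of v p q s] assms unfolding tri_def by auto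
  hence "dpat E q v p s" using assms symE unfolding tri_def dpat_def by auto
  then show ?thesis by (intro exI[of _ q] exI[of _ v] exI[of _ p] exI[of _ s]) auto
qed

lemma two_tri:
  assumes t1: "tri E v p q" and t2: "tri E v r s" and ne: "{v,p,q} \<noteq> {v,r,s}"
  shows "\<exists>a b c d. {v,p,q} \<subseteq> {a,b,c,d} \<and> dpat E a b c d"
proof -
  have t1': "tri E v q p" using tri_perm[OF t1] by blast
  have e: "E v p" "E v q" "E v r" "E v s" "E r s" "p \<noteq> q" "r \<noteq> s" "v \<noteq> r" "v \<noteq> s" "v \<noteq> p" "v \<noteq> q"
    using t1 t2 unfolding tri_def by auto
  have "r \<in> {p,q} \<or> s \<in> {p,q}" using no4[of v p q r s] e by auto
  moreover have "\<not> (r \<in> {p,q} \<and> s \<in> {p,q})" using ne e by auto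
  ultimately consider "r = p" "s \<notin> {p,q}" | "r = q" "s \<notin> {p,q}" | "s = p" "r \<notin> {p,q}" | "s = q" "r \<notin> {p,q}"
    by blast
  then show ?thesis
  proof cases
    case 1 then show ?thesis using tt[OF t1, of s] e by auto
  next
    case 2 then show ?thesis using tt[OF t1', of s] e by (auto simp: insert_commute)
  next
    case 3 then show ?thesis using tt[OF t1, of r] e symE by auto
  next
    case 4 then show ?thesis using tt[OF t1', of r] e symE by (auto simp: insert_commute)
  qed
qed

definition Pdef :: "'a set set" where
  "Pdef = {U. (\<exists>a b c d. U = {a,b,c,d} \<and> dpat E a b c d) \<or>
     ((\<exists>x y z. U = {x,y,z} \<and> tri E x y z) \<and> \<not> (\<exists>a b c d. U \<subseteq> {a,b,c,d} \<and> dpat E a b c d))}"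

lemma Pdef_unit: "U \<in> Pdef \<Longrightarrow> isunit E U"
  unfolding Pdef_def isunit_def by blast

lemma dd_eq:
  assumes A: "dpat E a b c d" and B: "dpat E a' b' c' d'" and w: "w \<in> {a,b,c,d}" "w \<in> {a',b',c',d'}"
  shows "{a,b,c,d} = {a',b',c',d'}"
proof -
  have t1: "tri E a' b' c'" and t2: "tri E b' c' d'" using B symE unfolding dpat_def tri_def by auto
  have "{a',b',c'} \<inter> {a,b,c,d} \<noteq> {} \<or> {b',c',d'} \<inter> {a,b,c,d} \<noteq> {}" using w by auto
  hence "{a',b',c'} \<subseteq> {a,b,c,d} \<or> {b',c',d'} \<subseteq> {a,b,c,d}" using dclosed[OF A t1] dclosed[OF A t2] by blast
  hence "{a',b',c'} \<inter> {a,b,c,d} \<noteq> {} \<and> {b',c',d'} \<inter> {a,b,c,d} \<noteq> {}" by auto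
  hence "{a',b',c',d'} \<subseteq> {a,b,c,d}" using dclosed[OF A t1] dclosed[OF A t2] by auto
  moreover have "card {a',b',c',d'} = card {a,b,c,d}" using A B unfolding dpat_def by simp
  ultimately show ?thesis by (intro card_subset_eq[symmetric]) auto
qed

lemma Pdef_mem: "A \<in> Pdef \<longleftrightarrow> (\<exists>a b c d. A = {a,b,c,d} \<and> dpat E a b c d) \<or>
     ((\<exists>x y z. A = {x,y,z} \<and> tri E x y z) \<and> \<not> (\<exists>a b c d. A \<subseteq> {a,b,c,d} \<and> dpat E a b c d))"
  unfolding Pdef_def by (rule mem_Collect_eq)

lemma dt_case:
  assumes "A = {a,b,c,d}" "dpat E a b c d" "B = {x,y,z}" "tri E x y z"
    "\<not> (\<exists>a b c d. B \<subseteq> {a,b,c,d} \<and> dpat E a b c d)" "w \<in> A" "w \<in> B"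
  shows False
proof -
  have w1: "w \<in> {x,y,z}" using assms(7) unfolding assms(3) .
  have w2: "w \<in> {a,b,c,d}" using assms(6) unfolding assms(1) .
  have "{x,y,z} \<inter> {a,b,c,d} \<noteq> {}" using w1 w2 by blast
  then have "{x,y,z} \<subseteq> {a,b,c,d}" by (rule dclosed[OF assms(2) assms(4)])
  then have "\<exists>a b c d. B \<subseteq> {a,b,c,d} \<and> dpat E a b c d" unfolding assms(3) using assms(2) by (intro exI conjI)
  then show False using assms(5) by (rule notE[rotated])
qed

lemma Pdef_disj:
  assumes A: "A \<in> Pdef" and B: "B \<in> Pdef" and w: "w \<in> A" "w \<in> B"
  shows "A = B"
proof -
  from A[unfolded Pdef_mem] show ?thesis
  proof (elim disjE conjE exE)
    fix a b c d assume a: "A = {a,b,c,d}" "dpat E a b c d"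
    from B[unfolded Pdef_mem] show ?thesis
    proof (elim disjE conjE exE)
      fix a' b' c' d' assume b: "B = {a',b',c',d'}" "dpat E a' b' c' d'"
      have "w \<in> {a,b,c,d}" "w \<in> {a',b',c',d'}" using w unfolding a(1) b(1) .
      then show ?thesis unfolding a(1) b(1) by (rule dd_eq[OF a(2) b(2)])
    next
      fix x y z assume b: "B = {x,y,z}" "tri E x y z" "\<not> (\<exists>a b c d. B \<subseteq> {a,b,c,d} \<and> dpat E a b c d)"
      show ?thesis using dt_case[OF a b w] by (rule FalseE)
    qed
  next
    fix x y z assume a: "A = {x,y,z}" "tri E x y z" and na: "\<not> (\<exists>a b c d. A \<subseteq> {a,b,c,d} \<and> dpat E a b c d)"
    from B[unfolded Pdef_mem] show ?thesis
    proof (elim disjE conjE exE)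
      fix a' b' c' d' assume b: "B = {a',b',c',d'}" "dpat E a' b' c' d'"
      show ?thesis using dt_case[OF b a na w(2) w(1)] by (rule FalseE)
    next
      fix x' y' z' assume b: "B = {x',y',z'}" "tri E x' y' z'"
      have wA: "w \<in> {x,y,z}" using w(1) unfolding a(1) .
      have wB: "w \<in> {x',y',z'}" using w(2) unfolding b(1) .
      obtain p q where pq0: "{x,y,z} = {w,p,q} \<and> tri E w p q" using tri_rot[OF a(2) wA] by iprover
      obtain r s where rs0: "{x',y',z'} = {w,r,s} \<and> tri E w r s" using tri_rot[OF b(2) wB] by iprover
      have pq: "A = {w,p,q}" "tri E w p q" using pq0 a(1) by simp_all
      have rs: "B = {w,r,s}" "tri E w r s" using rs0 b(1) by simp_all
      show ?thesis
      proof (rule ccontr)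
        assume "A \<noteq> B"
        then have "{w,p,q} \<noteq> {w,r,s}" using pq(1) rs(1) by simp
        from two_tri[OF pq(2) rs(2) this] obtain a b c d where "{w,p,q} \<subseteq> {a,b,c,d}" "dpat E a b c d" by blast
        then have "\<exists>a b c d. A \<subseteq> {a,b,c,d} \<and> dpat E a b c d" unfolding pq(1) by (intro exI conjI)
        then show False using na by (rule notE[rotated])
      qed
    qed
  qed
qed

lemma Pdef_part: "unit_partition V E Pdef"
proof -
  have "\<Union>Pdef \<subseteq> V" using Pdef_unit isunit_sub by blast
  moreover have "V \<subseteq> \<Union>Pdef"
  proof
    fix v assume "v \<in> V"
    then obtain p q where t: "tri E v p q" by (rule in_tri)
    show "v \<in> \<Union>Pdef"
    proof (cases "\<exists>a b c d. {v,p,q} \<subseteq> {a,b,c,d} \<and> dpat E a b c d")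
      case True
      then obtain a b c d where "{v,p,q} \<subseteq> {a,b,c,d}" and dp: "dpat E a b c d" by blast
      have "{a,b,c,d} \<in> Pdef" unfolding Pdef_mem
        by (rule disjI1, rule exI[of _ a], rule exI[of _ b], rule exI[of _ c], rule exI[of _ d], rule conjI[OF refl dp])
      moreover have "v \<in> {a,b,c,d}" using \<open>{v,p,q} \<subseteq> {a,b,c,d}\<close> by (rule subsetD) simp
      ultimately show ?thesis by (rule UnionI)
    next
      case False
      then have nd: "\<not> (\<exists>a b c d. {v,p,q} \<subseteq> {a,b,c,d} \<and> dpat E a b c d)" .
      have "{v,p,q} \<in> Pdef" unfolding Pdef_mem
        by (rule disjI2, rule conjI[OF _ nd], rule exI[of _ v], rule exI[of _ p], rule exI[of _ q], rule conjI[OF refl t])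
      moreover have "v \<in> {v,p,q}" by simp
      ultimately show ?thesis by (rule UnionI)
    qed
  qed
  moreover have "\<forall>A\<in>Pdef. \<forall>B\<in>Pdef. A \<noteq> B \<longrightarrow> A \<inter> B = {}" using Pdef_disj by blast
  moreover have "\<forall>A\<in>Pdef. induces_triangle V E A \<or> induces_diamond V E A"
    using Pdef_unit isunit_ind by blast
  ultimately show ?thesis unfolding unit_partition_def by blast
qed

lemma part_unit: "unit_partition V E Q \<Longrightarrow> U \<in> Q \<Longrightarrow> isunit E U"
  unfolding unit_partition_def using isunit_ind by blast

lemma part_uniq:
  assumes Q: "unit_partition V E Q"
  shows "Q = Pdef"
proof -
  have QP: "Q \<subseteq> Pdef"
  proof
    fix U assume U: "U \<in> Q"
    have "induces_triangle V E U \<or> induces_diamond V E U" using Q U unfolding unit_partition_def by blast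
    then show "U \<in> Pdef"
    proof
      assume "induces_diamond V E U"
      then show ?thesis using ind_dpat unfolding Pdef_def by blast
    next
      assume "induces_triangle V E U"
      then obtain x y z where xyz: "U = {x,y,z}" "tri E x y z" using ind_tri by blast
      have "\<not> (\<exists>a b c d. U \<subseteq> {a,b,c,d} \<and> dpat E a b c d)"
      proof
        assume "\<exists>a b c d. U \<subseteq> {a,b,c,d} \<and> dpat E a b c d"
        then obtain a b c d where sub: "U \<subseteq> {a,b,c,d}" and D: "dpat E a b c d" by blast
        let ?D = "{a,b,c,d}"
        have cD: "card ?D = 4" using D unfolding dpat_def by simp
        have cU: "card U = 3" using xyz unfolding tri_def by simp
        have "card (?D - U) = 1" using card_Diff_subset[OF _ sub] cD cU xyz(1) by simp
        then obtain t where tD: "?D - U = {t}" by (auto simp: card_Suc_eq)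
        have "t \<in> V" using tD isunit_sub[of ?D] D unfolding isunit_def by blast
        then obtain B where B: "B \<in> Q" "t \<in> B" using Q unfolding unit_partition_def by blast
        have "B \<noteq> U" using tD B by auto
        hence BU: "B \<inter> U = {}" using Q B U unfolding unit_partition_def by blast
        obtain p q where pq: "p \<noteq> q" "p \<in> B" "q \<in> B" "E t p" "E t q"
          using unit_two[OF part_unit[OF Q B(1)] B(2)] by blast
        have uD: "isunit E ?D" using D unfolding isunit_def by blast
        obtain r s where rs: "r \<noteq> s" "r \<in> ?D" "s \<in> ?D" "E t r" "E t s"
          using unit_two[OF uD, of t] tD by blast
        have "r \<noteq> t" "s \<noteq> t" using rs irr by auto
        hence "r \<in> U" "s \<in> U" using rs tD by auto
        then show False using no4[of t p q r s] pq rs BU by auto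
      qed
      then show ?thesis using xyz unfolding Pdef_def by blast
    qed
  qed
  moreover have "Pdef \<subseteq> Q"
  proof
    fix A assume A: "A \<in> Pdef"
    obtain v where v: "v \<in> A" using isunit_ne[OF Pdef_unit[OF A]] by blast
    then have "v \<in> V" using isunit_sub[OF Pdef_unit[OF A]] by blast
    then obtain B where "B \<in> Q" "v \<in> B" using Q unfolding unit_partition_def by blast
    then have "A = B" using Pdef_disj[OF A _ v] QP by blast
    then show "A \<in> Q" using \<open>B \<in> Q\<close> by simp
  qed
  ultimately show ?thesis by blast
qed

lemma the_part: "unit_partition V E (THE P. unit_partition V E P)"
  using Pdef_part part_uniq by (metis theI)

end

context cg begin

lemma step_unpack:
  assumes "spread_step 2 1 V E B B'"
  obtains w b where "w \<in> V" "w \<notin> B" "B' = insert w B" "2 \<le> card {v \<in> nbrs V E w. v \<in> B}"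
    "b \<in> nbrs V E w" "b \<in> B" "card {x \<in> nbrs V E b. x \<notin> B} \<le> 1"
  using assms unfolding spread_step_def by (auto simp: one_enat_def)

lemma steps_sub: "(spread_step 2 1 V E)\<^sup>*\<^sup>* S C \<Longrightarrow> S \<subseteq> C \<and> (S \<subseteq> V \<longrightarrow> C \<subseteq> V)"
proof (induct rule: rtranclp_induct)
  case base then show ?case by simp
next
  case (step y z) then show ?case by (auto elim!: step_unpack)
qed

lemma meets:
  assumes Q: "unit_partition V E Q" and U: "U \<in> Q" and S: "spreading_set 2 1 V E S"
  shows "U \<inter> S \<noteq> {}"
proof
  assume U0: "U \<inter> S = {}"
  have uU: "isunit E U" using part_unit[OF Q U] .
  have inv: "U \<inter> B' = {}" if st: "spread_step 2 1 V E B B'" and h: "U \<inter> B = {}" for B B'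
  proof -
    obtain w b where w: "w \<notin> B" "B' = insert w B" "2 \<le> card {v \<in> nbrs V E w. v \<in> B}"
      using step_unpack[OF st] by metis
    have "w \<notin> U"
    proof
      assume wU: "w \<in> U"
      obtain p q where "p \<in> {v \<in> nbrs V E w. v \<in> B}" "q \<in> {v \<in> nbrs V E w. v \<in> B}" "p \<noteq> q"
        using card_ge2_obtain[OF w(3)] by blast
      then show False using out_unique[OF uU wU, of p q] h unfolding nbrs_def by auto
    qed
    then show ?thesis using w h by auto
  qed
  have "(spread_step 2 1 V E)\<^sup>*\<^sup>* S V" using S unfolding spreading_set_def by blast
  then have "U \<inter> V = {}"
  proof (induct rule: rtranclp_induct)
    case base then show ?case using U0 .
  next
    case (step y z) then show ?case using inv by blast
  qed
  then show False using isunit_sub[OF uU] isunit_ne[OF uU] by blast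
qed

lemma lower:
  assumes Q: "unit_partition V E Q" and S: "spreading_set 2 1 V E S"
  shows "card Q + 1 \<le> card S"
proof (rule ccontr)
  assume "\<not> card Q + 1 \<le> card S"
  hence le: "card S \<le> card Q" by simp
  define f where "f U = (SOME x. x \<in> U \<inter> S)" for U
  have fU: "f U \<in> U \<inter> S" if "U \<in> Q" for U
  proof -
    have "\<exists>x. x \<in> U \<inter> S" using meets[OF Q that S] by blast
    then show ?thesis unfolding f_def by (rule someI_ex)
  qed
  have disj: "\<And>A B. A \<in> Q \<Longrightarrow> B \<in> Q \<Longrightarrow> A \<noteq> B \<Longrightarrow> A \<inter> B = {}" using Q unfolding unit_partition_def by blast
  have UQ: "\<Union>Q = V" using Q unfolding unit_partition_def by blast
  have SV: "S \<subseteq> V" using S unfolding spreading_set_def by blast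
  have finS: "finite S" using SV finV finite_subset by blast
  have inj: "inj_on f Q"
  proof (rule inj_onI)
    fix A B assume "A \<in> Q" "B \<in> Q" "f A = f B"
    then have "f A \<in> A" "f A \<in> B" using fU[of A] fU[of B] by auto
    then have "A \<inter> B \<noteq> {}" by blast
    then show "A = B" using disj \<open>A \<in> Q\<close> \<open>B \<in> Q\<close> by blast
  qed
  have fQS: "f ` Q \<subseteq> S" using fU by blast
  have ci: "card (f ` Q) = card Q" using card_image[OF inj] .
  have "card Q \<le> card S" by (rule card_inj_on_le[OF inj fQS finS])
  hence "card (f ` Q) = card S" using ci le by linarith
  hence fQ: "f ` Q = S" by (rule card_subset_eq[OF finS fQS])
  have key: "x = f U" if k1: "x \<in> S" and k2: "x \<in> U" and k3: "U \<in> Q" for x U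
  proof -
    have "x \<in> f ` Q" using fQ k1 by simp
    then obtain U' where "U' \<in> Q" "x = f U'" by (rule imageE) simp
    then have "x \<in> U'" using fU by blast
    then have "U' = U" using disj \<open>U' \<in> Q\<close> k2 k3 by blast
    then show ?thesis using \<open>x = f U'\<close> by simp
  qed
  have white2: "\<exists>p q. p \<noteq> q \<and> E b p \<and> E b q \<and> p \<notin> S \<and> q \<notin> S" if b: "b \<in> S" for b
  proof -
    obtain U where U: "U \<in> Q" "b \<in> U" using UQ SV b by blast
    obtain p q where pq: "p \<noteq> q" "p \<in> U" "q \<in> U" "E b p" "E b q"
      using unit_two[OF part_unit[OF Q U(1)] U(2)] by blast
    have bf: "b = f U" using key[OF b U(2) U(1)] .
    have "p \<notin> S"
    proof
      assume "p \<in> S"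
      then have "p = f U" using key pq(2) U(1) by blast
      then have "E b b" using pq(4) bf by simp
      then show False using irr by blast
    qed
    moreover have "q \<notin> S"
    proof
      assume "q \<in> S"
      then have "q = f U" using key pq(3) U(1) by blast
      then have "E b b" using pq(5) bf by simp
      then show False using irr by blast
    qed
    ultimately show ?thesis using pq by blast
  qed
  have "V \<noteq> {}" using CO unfolding connected_graph_def by blast
  have "S \<noteq> V"
  proof
    assume "S = V"
    obtain v where "v \<in> V" using \<open>V \<noteq> {}\<close> by blast
    then obtain p where "E v p" "p \<notin> S" using white2 \<open>S = V\<close> by blast
    then show False using inV2 \<open>S = V\<close> by blast
  qed
  have "(spread_step 2 1 V E)\<^sup>*\<^sup>* S V" using S unfolding spreading_set_def by blast
  then show False
  proof (cases rule: converse_rtranclpE)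
    case base then show False using \<open>S \<noteq> V\<close> by simp
  next
    case (step S')
    obtain w b where "w \<in> V" "w \<notin> S" "S' = insert w S" "2 \<le> card {v \<in> nbrs V E w. v \<in> S}"
      "b \<in> nbrs V E w" and b: "b \<in> S" "card {x \<in> nbrs V E b. x \<notin> S} \<le> 1"
      by (rule step_unpack[OF step(1)])
    obtain p q where pq: "p \<noteq> q" "E b p" "E b q" "p \<notin> S" "q \<notin> S" using white2[OF b(1)] by blast
    have "{p,q} \<subseteq> {x \<in> nbrs V E b. x \<notin> S}" using pq inV2 unfolding nbrs_def by auto
    hence "card {p,q} \<le> card {x \<in> nbrs V E b. x \<notin> S}"
      by (rule card_mono[rotated]) (use fin_nbrs in auto)
    then show False using b(2) pq(1) by simp
  qed
qed

end

context cg begin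

definition closed :: "'a set \<Rightarrow> bool" where
  "closed C \<longleftrightarrow> (\<forall>C'. \<not> spread_step 2 1 V E C C')"

lemma add:
  assumes cl: "closed C" and e: "E y p" "E y q" "p \<noteq> q" "p \<in> C" "q \<in> C"
    and w: "\<forall>z. E p z \<longrightarrow> z \<notin> C \<longrightarrow> z = y"
  shows "y \<in> C"
proof (rule ccontr)
  assume yC: "y \<notin> C"
  have "{p,q} \<subseteq> {v \<in> nbrs V E y. v \<in> C}" using e inV2 unfolding nbrs_def by auto
  hence "card {p,q} \<le> card {v \<in> nbrs V E y. v \<in> C}"
    by (rule card_mono[rotated]) (use fin_nbrs in auto)
  hence c2: "2 \<le> card {v \<in> nbrs V E y. v \<in> C}" using e(3) by simp
  have "{x \<in> nbrs V E p. x \<notin> C} \<subseteq> {y}" using w unfolding nbrs_def by auto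
  hence "card {x \<in> nbrs V E p. x \<notin> C} \<le> card {y}" by (rule card_mono[rotated]) simp
  hence c1: "enat (card {x \<in> nbrs V E p. x \<notin> C}) \<le> 1" by (simp add: one_enat_def)
  have pn: "p \<in> nbrs V E y" using e inV2 unfolding nbrs_def by auto
  have "spread_step 2 1 V E C (insert y C)"
    unfolding spread_step_def using inV1[OF e(1)] yC c2 c1 pn e(4) by blast
  then show False using cl unfolding closed_def by blast
qed

lemma A_diam:
  assumes cl: "closed C" and D: "dpat E a b c d" and ab: "a \<in> C" "b \<in> C"
    and out: "\<forall>z. E a z \<longrightarrow> z \<notin> {a,b,c,d} \<longrightarrow> z \<in> C"
  shows "{a,b,c,d} \<subseteq> C"
proof -
  have e: "E a b" "E a c" "E b c" "E b d" "E c d" "\<not> E a d" "distinct [a,b,c,d]"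
    using D unfolding dpat_def by auto
  have cC: "c \<in> C"
  proof (rule add[OF cl _ _ _ ab(1) ab(2)])
    show "E c a" "E c b" using e symE by auto
    show "a \<noteq> b" using e by auto
    show "\<forall>z. E a z \<longrightarrow> z \<notin> C \<longrightarrow> z = c"
      using out e ab irr by auto
  qed
  have dC: "d \<in> C"
  proof (rule add[OF cl _ _ _ ab(2) cC])
    show "E d b" "E d c" using e symE by auto
    show "b \<noteq> c" using e by auto
    show "\<forall>z. E b z \<longrightarrow> z \<notin> C \<longrightarrow> z = d"
      using dpat_b[OF D] ab cC by auto
  qed
  show ?thesis using ab cC dC by auto
qed

lemma lemA:
  assumes cl: "closed C" and W: "isunit E W" and y: "y \<in> W" and x: "x \<in> W" "E y x" "x \<in> C"
    and y': "E y y'" "y' \<notin> W" "y' \<in> C" and w: "\<forall>z. E y' z \<longrightarrow> z \<notin> C \<longrightarrow> z = y"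
  shows "W \<subseteq> C"
proof -
  have yC: "y \<in> C" using add[OF cl y'(1) x(2) _ y'(3) x(3) w] x(1) y'(2) by blast
  have outW: "z \<in> C" if "E y z" "z \<notin> W" for z
    using out_unique[OF W y that(1) y'(1) that(2) y'(2)] y'(3) by simp
  from W consider (t) a b c where "W = {a,b,c}" "tri E a b c"
    | (d) a b c d where "W = {a,b,c,d}" "dpat E a b c d" unfolding isunit_def by blast
  then show ?thesis
  proof cases
    case t
    show ?thesis
    proof
      fix u assume uW: "u \<in> W"
      show "u \<in> C"
      proof (cases "u = x \<or> u = y")
        case True then show ?thesis using x yC by blast
      next
        case False
        have xy: "x \<noteq> y" using x irr by auto
        have e: "E u y" "E u x" using t uW x y False symE unfolding tri_def by auto
        show ?thesis
        proof (rule add[OF cl e xy[symmetric] yC x(3)])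
          show "\<forall>z. E y z \<longrightarrow> z \<notin> C \<longrightarrow> z = u"
          proof (intro allI impI)
            fix z assume "E y z" "z \<notin> C"
            then have "z \<in> W" using outW by blast
            moreover have "z \<noteq> y" using \<open>E y z\<close> irr by auto
            moreover have "z \<noteq> x" using x \<open>z \<notin> C\<close> by auto
            ultimately show "z = u" using t uW x y False xy by auto
          qed
        qed
      qed
    qed
  next
    case d
    have ntip1: "y \<noteq> b"
    proof
      assume "y = b" then have "E b y'" using y'(1) by simp
      then have "y' = a \<or> y' = c \<or> y' = d" by (rule dpat_b[OF d(2)])
      then show False using y'(2) d(1) by auto
    qed
    have ntip2: "y \<noteq> c"
    proof
      assume "y = c" then have "E c y'" using y'(1) by simp
      then have "y' = a \<or> y' = b \<or> y' = d" by (rule dpat_c[OF d(2)])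
      then show False using y'(2) d(1) by auto
    qed
    note ntip = ntip1 ntip2
    hence ya: "y = a \<or> y = d" using y d(1) by auto
    have e: "E a b" "E a c" "E b c" "E b d" "E c d" "\<not> E a d" "distinct [a,b,c,d]"
      using d(2) unfolding dpat_def by auto
    have xbc: "x = b \<or> x = c" using ya x e d(1) irr symE by auto
    have out: "\<forall>z. E y z \<longrightarrow> z \<notin> W \<longrightarrow> z \<in> C" using outW by blast
    have "{a,b,c,d} \<subseteq> C"
    proof (cases "y = a")
      case True
      show ?thesis
      proof (cases "x = b")
        case True then show ?thesis using A_diam[OF cl d(2)] \<open>y = a\<close> yC x(3) out d(1) by blast
      next
        case False then have "x = c" using xbc by simp
        then show ?thesis using A_diam[OF cl dpat_sym1[OF d(2)]] \<open>y = a\<close> yC x(3) out d(1)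
          by (metis insert_commute)
      qed
    next
      case False then have yd: "y = d" using ya by simp
      show ?thesis
      proof (cases "x = b")
        case True then show ?thesis using A_diam[OF cl dpat_sym2[OF d(2)]] yd yC x(3) out d(1)
          by (metis insert_commute)
      next
        case False then have "x = c" using xbc by simp
        then show ?thesis using A_diam[OF cl dpat_sym1[OF dpat_sym2[OF d(2)]]] yd yC x(3) out d(1)
          by (metis insert_commute)
      qed
    qed
    then show ?thesis using d(1) by simp
  qed
qed

end

context cg begin

lemma base:
  assumes W: "isunit E U"
  shows "\<exists>S. S \<subseteq> U \<and> card S \<le> 3 \<and> (\<forall>C. closed C \<longrightarrow> S \<subseteq> C \<longrightarrow> U \<subseteq> C)"
proof -
  from W consider (t) a b c where "U = {a,b,c}" "tri E a b c"
    | (d) a b c d where "U = {a,b,c,d}" "dpat E a b c d" unfolding isunit_def by blast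
  then show ?thesis
  proof cases
    case t then show ?thesis by (intro exI[of _ U]) (auto simp: card_insert_if)
  next
    case d
    have e: "E d b" "E d c" "b \<noteq> c" using d(2) symE unfolding dpat_def by auto
    have "\<forall>C. closed C \<longrightarrow> {a,b,c} \<subseteq> C \<longrightarrow> U \<subseteq> C"
    proof (intro allI impI)
      fix C assume cl: "closed C" and s: "{a,b,c} \<subseteq> C"
      have "d \<in> C"
        by (rule add[OF cl e]) (use s dpat_b[OF d(2)] in auto)
      then show "U \<subseteq> C" using s d(1) by auto
    qed
    moreover have "card {a,b,c} \<le> 3" by (auto simp: card_insert_if)
    ultimately show ?thesis using d(1) by (intro exI[of _ "{a,b,c}"]) auto
  qed
qed

lemma cross:
  assumes "R\<^sup>*\<^sup>* x z" "x \<in> A" "z \<notin> A"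
  shows "\<exists>p q. R p q \<and> p \<in> A \<and> q \<notin> A"
  using assms
proof (induct rule: rtranclp_induct)
  case base then show ?case by simp
next
  case (step y z) then show ?case by blast
qed

lemma grow:
  assumes Q: "unit_partition V E Q"
  shows "1 \<le> k \<Longrightarrow> k \<le> card Q \<Longrightarrow> \<exists>UU S. UU \<subseteq> Q \<and> card UU = k \<and> S \<subseteq> V \<and> card S \<le> k + 2
           \<and> (\<forall>C. closed C \<longrightarrow> S \<subseteq> C \<longrightarrow> \<Union>UU \<subseteq> C)"
proof (induct k)
  case 0 then show ?case by simp
next
  case (Suc k)
  have UQ: "\<Union>Q = V" using Q unfolding unit_partition_def by blast
  have disj: "\<And>A B. A \<in> Q \<Longrightarrow> B \<in> Q \<Longrightarrow> A \<noteq> B \<Longrightarrow> A \<inter> B = {}" using Q unfolding unit_partition_def by blast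
  have finQ: "finite Q" using UQ finV by (metis finite_UnionD)
  show ?case
  proof (cases "k = 0")
    case True
    have "Q \<noteq> {}" using Suc.prems True by auto
    then obtain U where U: "U \<in> Q" by blast
    obtain S where S: "S \<subseteq> U" "card S \<le> 3" "\<forall>C. closed C \<longrightarrow> S \<subseteq> C \<longrightarrow> U \<subseteq> C"
      using base[OF part_unit[OF Q U]] by blast
    have "S \<subseteq> V" using S(1) U UQ by blast
    then show ?thesis using S U True by (intro exI[of _ "{U}"] exI[of _ S]) auto
  next
    case False
    then obtain UU S where IH: "UU \<subseteq> Q" "card UU = k" "S \<subseteq> V" "card S \<le> k + 2"
      "\<forall>C. closed C \<longrightarrow> S \<subseteq> C \<longrightarrow> \<Union>UU \<subseteq> C" using Suc by auto
    have finUU: "finite UU" using IH(1) finQ finite_subset by blast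
    have "UU \<noteq> Q" using IH(2) Suc.prems by auto
    then obtain U where U: "U \<in> Q" "U \<notin> UU" using IH(1) by blast
    obtain v where v: "v \<in> U" using isunit_ne[OF part_unit[OF Q U(1)]] by blast
    have vn: "v \<notin> \<Union>UU" using v U IH(1) disj by blast
    have "UU \<noteq> {}" using IH(2) False by auto
    then obtain U1 where U1: "U1 \<in> UU" by blast
    obtain u0 where u0: "u0 \<in> U1" using isunit_ne[OF part_unit[OF Q]] U1 IH(1) by blast
    have "u0 \<in> V" "v \<in> V" using u0 U1 IH(1) v U UQ by blast+
    then have "(\<lambda>a b. a \<in> V \<and> b \<in> V \<and> E a b)\<^sup>*\<^sup>* u0 v" using CO unfolding connected_graph_def by blast
    then obtain y' y where yy: "E y' y" "y' \<in> \<Union>UU" "y \<notin> \<Union>UU"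
      using cross[of _ u0 v "\<Union>UU"] u0 U1 vn by blast
    obtain U' where U': "U' \<in> UU" "y' \<in> U'" using yy by blast
    have "y \<in> V" using yy inV2 by blast
    then obtain W where W: "W \<in> Q" "y \<in> W" using UQ by blast
    have WnU: "W \<notin> UU" using W yy by blast
    have uW: "isunit E W" using part_unit[OF Q W(1)] .
    obtain x where x: "x \<in> W" "E y x" using unit_two[OF uW W(2)] by blast
    have y'W: "y' \<notin> W" using disj[of W U'] W U' IH(1) WnU by blast
    have uU': "isunit E U'" using part_unit[OF Q] U' IH(1) by blast
    have yU': "y \<notin> U'" using yy U' by blast
    show ?thesis
    proof (intro exI[of _ "insert W UU"] exI[of _ "insert x S"] conjI allI impI)
      show "insert W UU \<subseteq> Q" using W IH(1) by blast
      show "card (insert W UU) = Suc k" using finUU WnU IH(2) by simp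
      show "insert x S \<subseteq> V" using x IH(3) inV2 by blast
      show "card (insert x S) \<le> Suc k + 2" using IH(4) card_insert_le[of S x] finV IH(3)
        by (metis add_Suc card_insert_if finite_subset le_SucI Suc_le_mono)
    next
      fix C assume cl: "closed C" and sC: "insert x S \<subseteq> C"
      have UUC: "\<Union>UU \<subseteq> C" using IH(5) cl sC by blast
      have "W \<subseteq> C"
      proof (rule lemA[OF cl uW W(2) x(1) x(2) _ symE[OF yy(1)] y'W])
        show "x \<in> C" using sC by blast
        show "y' \<in> C" using UUC yy by blast
        show "\<forall>z. E y' z \<longrightarrow> z \<notin> C \<longrightarrow> z = y"
        proof (intro allI impI)
          fix z assume "E y' z" "z \<notin> C"
          then have "z \<notin> U'" using UUC U' by blast
          then show "z = y" using out_unique[OF uU' U'(2) \<open>E y' z\<close> yy(1) _ yU'] by blast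
        qed
      qed
      then show "\<Union>(insert W UU) \<subseteq> C" using UUC by auto
    qed
  qed
qed

lemma reach_closed:
  assumes SV: "S \<subseteq> V"
  shows "\<exists>C. (spread_step 2 1 V E)\<^sup>*\<^sup>* S C \<and> closed C"
proof -
  let ?R = "{C. (spread_step 2 1 V E)\<^sup>*\<^sup>* S C}"
  have "?R \<subseteq> Pow V" using steps_sub SV by blast
  hence fin: "finite ?R" using finV by (meson finite_Pow_iff finite_subset)
  have "S \<in> ?R" by simp
  then obtain m where m: "m \<in> ?R" "\<forall>b\<in>?R. m \<le> b \<longrightarrow> m = b"
    using finite_has_maximal[OF fin] by blast
  have "closed m"
    unfolding closed_def
  proof (intro allI notI)
    fix C' assume st: "spread_step 2 1 V E m C'"
    then have "C' \<in> ?R" using m(1) by (auto intro: rtranclp.rtrancl_into_rtrancl)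
    moreover obtain w where "w \<notin> m" "C' = insert w m" using step_unpack[OF st] by metis
    ultimately show False using m(2) by blast
  qed
  then show ?thesis using m(1) by blast
qed

lemma upper:
  assumes Q: "unit_partition V E Q"
  shows "sigma 2 1 V E \<le> card Q + 2"
proof -
  have UQ: "\<Union>Q = V" using Q unfolding unit_partition_def by blast
  have finQ: "finite Q" using UQ finV by (metis finite_UnionD)
  have "V \<noteq> {}" using CO unfolding connected_graph_def by blast
  hence "Q \<noteq> {}" using UQ by auto
  hence "1 \<le> card Q" using finQ by (simp add: Suc_le_eq card_gt_0_iff)
  then obtain UU S where G: "UU \<subseteq> Q" "card UU = card Q" "S \<subseteq> V" "card S \<le> card Q + 2"
      "\<forall>C. closed C \<longrightarrow> S \<subseteq> C \<longrightarrow> \<Union>UU \<subseteq> C" using grow[OF Q, of "card Q"] by auto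
  have "UU = Q" using card_subset_eq[OF finQ G(1) G(2)] .
  obtain C where C: "(spread_step 2 1 V E)\<^sup>*\<^sup>* S C" "closed C" using reach_closed[OF G(3)] by blast
  have "S \<subseteq> C" "C \<subseteq> V" using steps_sub[OF C(1)] G(3) by auto
  hence "C = V" using G(5) C(2) \<open>UU = Q\<close> UQ by blast
  hence sp: "spreading_set 2 1 V E S" using C(1) G(3) unfolding spreading_set_def by simp
  have "sigma 2 1 V E \<le> card S" unfolding sigma_def using sp by (intro Least_le) blast
  then show ?thesis using G(4) by simp
qed

lemma sigma_witness: "\<exists>S. spreading_set 2 1 V E S \<and> card S = sigma 2 1 V E"
proof -
  have "\<exists>k S. spreading_set 2 1 V E S \<and> card S = k" unfolding spreading_set_def by blast
  then show ?thesis unfolding sigma_def by (rule LeastI_ex)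
qed

lemma main: "num_units V E + 1 \<le> sigma 2 1 V E \<and> sigma 2 1 V E \<le> num_units V E + 2"
proof -
  let ?Q = "THE P. unit_partition V E P"
  have Q: "unit_partition V E ?Q" by (rule the_part)
  obtain S where S: "spreading_set 2 1 V E S" "card S = sigma 2 1 V E" using sigma_witness by blast
  show ?thesis unfolding num_units_def using lower[OF Q S(1)] S(2) upper[OF Q] by simp
qed

end

theorem theorem4p9:
  fixes V :: "'a set" and E :: "'a \<Rightarrow> 'a \<Rightarrow> bool"
  assumes "graph V E" and "connected_graph V E" and "claw_free V E" and "cubic V E"
    and "\<not> is_K4 V E"
  shows "num_units V E + 1 \<le> sigma 2 1 V E \<and> sigma 2 1 V E \<le> num_units V E + 2"
proof -
  interpret cg V E using assms by unfold_locales
  show ?thesis by (rule main)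
qed

end
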